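(* The ordinary differential equation $$z''+\Big(2\frac{w'}{w}+\frac1r\Big)z'-2w^2z=0,\qquad r\in(0,\infty),$$ admits two linearly independent real solutions $z_{1,0},z_{2,0}$ such that $z_{1,0}(r)=O(1)$ as $r\to0^+$ and $z_{1,0}(r)=O(r^{-1/2}e^{\sqrt2 r})$ as $r\to\infty$, while $z_{2,0}(r)=O(r^{-2})$ as $r\to0^+$ and $z_{2,0}(r)=O(r^{-1/2}e^{-\sqrt2 r})$ as $r\to\infty$.
   Context: Let $w:[0,\infty)\to\mathbb{R}$ be the unique solution of $w''+\frac1r w'-\frac1{r^2}w+(1-w^2)w=0$ on $(0,\infty)$ with $w(0)=0$ and $w(r)\to1$ as $r\to\infty$; it satisfies $0<w<1$ and $w'>0$ on $(0,\infty)$, $w(r)=\alpha r+O(r^3)$ as $r\to0^+$ for some $\alpha>0$, and $w(r)=1-\frac{1}{2r^2}+O(r^{-4})$, $w'(r)=r^{-3}+O(r^{-5})$ as $r\to\infty$. *)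

theory Defs
  imports "HOL-Analysis.Analysis" "HOL-Library.Landau_Symbols"
begin

definition is_profile :: "(real \<Rightarrow> real) \<Rightarrow> (real \<Rightarrow> real) \<Rightarrow> (real \<Rightarrow> real) \<Rightarrow> bool" where
  "is_profile w w' w'' \<longleftrightarrow>
     (\<forall>r>0. (w has_real_derivative w' r) (at r) \<and> (w' has_real_derivative w'' r) (at r) \<and>
        w'' r + w' r / r - w r / r\<^sup>2 + (1 - (w r)\<^sup>2) * w r = 0)
   \<and> w 0 = 0 \<and> (w \<longlongrightarrow> 1) at_top"

definition is_lin_sol :: "(real \<Rightarrow> real) \<Rightarrow> (real \<Rightarrow> real) \<Rightarrow> (real \<Rightarrow> real) \<Rightarrow> (real \<Rightarrow> real) \<Rightarrow> (real \<Rightarrow> real) \<Rightarrow> bool" where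
  "is_lin_sol w w' z z' z'' \<longleftrightarrow>
     (\<forall>r>0. (z has_real_derivative z' r) (at r) \<and> (z' has_real_derivative z'' r) (at r) \<and>
        z'' r + (2 * w' r / w r + 1 / r) * z' r - 2 * (w r)\<^sup>2 * z r = 0)"

definition lin_indep_pos :: "(real \<Rightarrow> real) \<Rightarrow> (real \<Rightarrow> real) \<Rightarrow> bool" where
  "lin_indep_pos f g \<longleftrightarrow>
     (\<forall>a b. (\<forall>r>0. a * f r + b * g r = 0) \<longrightarrow> a = 0 \<and> b = 0)"

end

theory Submission imports Defs begin


lemma cont_from:
  fixes F :: "real \<Rightarrow> real"
  assumes "\<And>t. t > 0 \<Longrightarrow> isCont F t" "(F \<longlongrightarrow> F 0) (at 0 within {0..})"
  shows "continuous_on {0..b} F"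
proof -
  { fix x assume x: "x \<in> {0..b}"
    have "continuous (at x within {0..b}) F"
    proof (cases "x = 0")
      case True then show ?thesis using assms(2) unfolding continuous_within
        by (auto intro: tendsto_within_subset)
    next
      case False then have "x>0" using x by auto
      then show ?thesis using assms(1) continuous_at_imp_continuous_within by blast
    qed }
  then show ?thesis using continuous_on_eq_continuous_within by blast
qed

lemma squeeze0:
  fixes F G :: "real \<Rightarrow> real"
  assumes "\<And>t. t > 0 \<Longrightarrow> \<bar>F t\<bar> \<le> G t" "(G \<longlongrightarrow> 0) (at 0 within {0..})" "F 0 = 0"
  shows "(F \<longlongrightarrow> F 0) (at 0 within {0..})"
proof -
  have "eventually (\<lambda>t. norm (F t) \<le> G t) (at 0 within {0..})"
    unfolding eventually_at_filter using assms(1) by (auto intro!: always_eventually)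
  then have "(F \<longlongrightarrow> 0) (at 0 within {0..})" by (rule Lim_null_comparison[OF _ assms(2)])
  then show ?thesis using assms(3) by simp
qed

lemma deriv_interior:
  assumes "((f::real\<Rightarrow>real) has_real_derivative D) (at t within {a..b})" "a < t" "t < b"
  shows "(f has_real_derivative D) (at t)"
proof -
  have "t \<in> interior {a..b}" using assms by auto
  then show ?thesis using assms(1) at_within_interior by metis
qed

locale P =
  fixes w w' :: "real \<Rightarrow> real"
  assumes wd: "\<And>r. r>0 \<Longrightarrow> (w has_real_derivative w' r) (at r)"
    and wpos: "\<And>r. r>0 \<Longrightarrow> 0 < w r"
    and wlt1: "\<And>r. r>0 \<Longrightarrow> w r < 1"
    and w'pos: "\<And>r. r>0 \<Longrightarrow> w' r > 0"
    and w0: "w 0 = 0"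
begin

lemma wmono: assumes "0 \<le> t" "t \<le> s" shows "w t \<le> w s"
proof (cases "t = 0")
  case True then show ?thesis using w0 wpos[of s] assms by (cases "s = 0") auto
next
  case False
  then have "t > 0" using assms by auto
  show ?thesis
    by (rule deriv_nonneg_imp_mono[of t s w w']) (use \<open>t>0\<close> assms wd w'pos in \<open>auto intro: less_imp_le\<close>)
qed

lemma wnn: "0 \<le> t \<Longrightarrow> 0 \<le> w t" using w0 wpos by (cases "t = 0") (auto intro: less_imp_le)
lemma wle1: "0 \<le> t \<Longrightarrow> w t \<le> 1" using w0 wlt1 by (cases "t = 0") (auto intro: less_imp_le)

lemma wcont: "t > 0 \<Longrightarrow> isCont w t" using wd DERIV_isCont by blast

definition "q t = 2*t*(w t)^4"
definition "p s = s*(w s)^2"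
definition "E (r::real) = exp (r^2/2)"
definition "good f \<longleftrightarrow> (\<forall>b. continuous_on {0..b} f) \<and> (\<forall>r\<ge>0. 0 \<le> f r \<and> f r \<le> E r)"
definition "Phi f s = integral {0..s} (\<lambda>t. q t * f t)"
definition "h f s = Phi f s / p s"
definition "T f r = integral {0..r} (h f)"

lemma q_isCont: "t > 0 \<Longrightarrow> isCont q t"
  unfolding q_def by (intro continuous_intros wcont)

lemma q_cont: "continuous_on {0..b} q"
proof (rule cont_from)
  show "\<And>t. t>0 \<Longrightarrow> isCont q t" by (rule q_isCont)
  show "(q \<longlongrightarrow> q 0) (at 0 within {0..})"
  proof (rule squeeze0)
    fix t :: real assume t: "t > 0"
    have "(w t)^4 \<le> 1" using wnn[of t] wle1[of t] t by (simp add: power_le_one)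
    then show "\<bar>q t\<bar> \<le> 2*t" using t wnn[of t] unfolding q_def
      by (simp add: abs_mult mult_le_cancel_left1)
  next
    show "((\<lambda>t::real. 2*t) \<longlongrightarrow> 0) (at 0 within {0..})" by (auto intro!: tendsto_eq_intros)
  qed (simp add: q_def)
qed

lemma q_nn: "t \<ge> 0 \<Longrightarrow> q t \<ge> 0" unfolding q_def using wnn by simp

lemma q_le: assumes "0 \<le> t" "t \<le> s" shows "q t \<le> 2*t*(w s)^4"
  unfolding q_def using assms wmono[OF assms] wnn[of t]
  by (intro mult_left_mono power_mono) auto

lemma p_pos: "s > 0 \<Longrightarrow> p s > 0" unfolding p_def using wpos[of s] by simp

lemma p_deriv: "s > 0 \<Longrightarrow> (p has_real_derivative (w s)^2 + 2 * s * w s * w' s) (at s)"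
  unfolding p_def by (auto intro!: derivative_eq_intros wd simp: power2_eq_square)

lemma E_deriv: "(E has_real_derivative r * E r) (at r)"
  unfolding E_def by (auto intro!: derivative_eq_intros simp: power2_eq_square)

lemma E_ge1: "r \<ge> 0 \<Longrightarrow> E r \<ge> 1" unfolding E_def by simp
lemma E_mono: "0 \<le> t \<Longrightarrow> t \<le> s \<Longrightarrow> E t \<le> E s" unfolding E_def
  by (simp add: power_mono)


lemma int_lin: assumes "0 \<le> s" shows "((\<lambda>t::real. 2*t) has_integral s^2) {0..s}"
proof -
  have "((\<lambda>t::real. 2*t) has_integral (s^2 - 0^2)) {0..s}"
    by (rule fundamental_theorem_of_calculus)
       (use assms in \<open>auto intro!: derivative_eq_intros simp: has_real_derivative_iff_has_vector_derivative[symmetric]\<close>)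
  then show ?thesis by simp
qed

lemma int_E: assumes "0 \<le> r" shows "((\<lambda>s. s * E s) has_integral (E r - 1)) {0..r}"
proof -
  have "((\<lambda>s. s * E s) has_integral (E r - E 0)) {0..r}"
    by (rule fundamental_theorem_of_calculus)
       (use assms E_deriv in \<open>auto simp: has_real_derivative_iff_has_vector_derivative[symmetric] intro: has_field_derivative_at_within\<close>)
  then show ?thesis by (simp add: E_def)
qed

lemma good_cont: "good f \<Longrightarrow> continuous_on {0..b} f" unfolding good_def by blast
lemma good_nn: "good f \<Longrightarrow> r \<ge> 0 \<Longrightarrow> 0 \<le> f r" unfolding good_def by blast
lemma good_le: "good f \<Longrightarrow> r \<ge> 0 \<Longrightarrow> f r \<le> E r" unfolding good_def by blast

lemma qf_cont: "good f \<Longrightarrow> continuous_on {0..b} (\<lambda>t. q t * f t)"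
  by (intro continuous_intros q_cont good_cont)

lemma qf_int: "good f \<Longrightarrow> (\<lambda>t. q t * f t) integrable_on {0..b}"
  by (intro integrable_continuous_real qf_cont)

lemma Phi_deriv: assumes "good f" "t > 0" shows "(Phi f has_real_derivative q t * f t) (at t)"
proof -
  have "(Phi f has_real_derivative q t * f t) (at t within {0..t+1})"
    unfolding Phi_def by (rule integral_has_real_derivative) (use assms qf_cont in auto)
  then show ?thesis by (rule deriv_interior) (use assms in auto)
qed

lemma Phi_isCont: "good f \<Longrightarrow> t > 0 \<Longrightarrow> isCont (Phi f) t"
  using Phi_deriv DERIV_isCont by blast

lemma Phi_nn: assumes "good f" "s \<ge> 0" shows "0 \<le> Phi f s"
  unfolding Phi_def by (rule integral_nonneg) (use assms qf_int q_nn good_nn in auto)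

lemma Phi_le: assumes "good f" "s \<ge> 0" shows "Phi f s \<le> E s * (w s)^4 * s^2"
proof -
  have i: "((\<lambda>t. (E s * (w s)^4) * (2*t)) has_integral (E s * (w s)^4) * s^2) {0..s}"
    by (rule has_integral_mult_right) (rule int_lin[OF assms(2)])
  have "Phi f s \<le> (E s * (w s)^4) * s^2"
    unfolding Phi_def
  proof (rule has_integral_le[OF integrable_integral[OF qf_int[OF assms(1)]] i])
    fix t assume t: "t \<in> {0..s}"
    have "f t \<le> E s" using good_le[OF assms(1), of t] E_mono[of t s] t by auto
    then have "q t * f t \<le> (2*t*(w s)^4) * E s"
      by (intro mult_mono) (use t q_le good_nn[OF assms(1)] wnn in auto)
    then show "q t * f t \<le> (E s * (w s)^4) * (2*t)" by (simp add: algebra_simps)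
  qed
  then show ?thesis by simp
qed

lemma Phi_mono: assumes "good f" "good g" "\<And>t. t \<ge> 0 \<Longrightarrow> f t \<le> g t" "s \<ge> 0"
  shows "Phi f s \<le> Phi g s"
  unfolding Phi_def
  by (rule integral_le) (use assms qf_int q_nn in \<open>auto intro: mult_left_mono\<close>)

lemma h_nn: "good f \<Longrightarrow> s \<ge> 0 \<Longrightarrow> 0 \<le> h f s"
  unfolding h_def using Phi_nn p_def wnn by simp

lemma h_le: assumes "good f" "s \<ge> 0" shows "h f s \<le> s * E s"
proof (cases "s = 0")
  case True then show ?thesis by (simp add: h_def p_def)
next
  case False
  then have s: "s > 0" using assms by auto
  have pp: "p s > 0" using p_pos[OF s] .
  have "Phi f s \<le> E s * (w s)^4 * s^2" by (rule Phi_le[OF assms])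
  also have "\<dots> = (E s * (w s)^2 * s) * p s" by (simp add: p_def power2_eq_square power4_eq_xxxx)
  also have "\<dots> \<le> (s * E s) * p s"
  proof -
    have "(w s)^2 \<le> 1" using wnn[of s] wle1[of s] s by (simp add: power_le_one)
    then have "E s * (w s)^2 * s \<le> s * E s" using s E_ge1[of s]
      by (simp add: mult.commute mult_left_le)
    then show ?thesis using pp by (simp add: mult_right_mono)
  qed
  finally show ?thesis unfolding h_def using pp by (simp add: divide_le_eq)
qed

lemma h_cont: assumes "good f" shows "continuous_on {0..b} (h f)"
proof (rule cont_from)
  fix t :: real assume t: "t > 0"
  have "isCont p t" using p_deriv[OF t] DERIV_isCont by blast
  then show "isCont (h f) t" unfolding h_def
    using Phi_isCont[OF assms t] p_pos[OF t] by (intro continuous_intros) auto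
next
  show "(h f \<longlongrightarrow> h f 0) (at 0 within {0..})"
  proof (rule squeeze0)
    fix t :: real assume "t > 0"
    then show "\<bar>h f t\<bar> \<le> t * E t" using h_le[OF assms] h_nn[OF assms] by simp
  next
    show "((\<lambda>t. t * E t) \<longlongrightarrow> 0) (at 0 within {0..})" unfolding E_def
      by (auto intro!: tendsto_eq_intros)
  qed (simp add: h_def p_def)
qed

lemma h_int: "good f \<Longrightarrow> h f integrable_on {0..b}"
  by (intro integrable_continuous_real h_cont)

lemma T_deriv: assumes "good f" "t > 0" shows "(T f has_real_derivative h f t) (at t)"
proof -
  have "(T f has_real_derivative h f t) (at t within {0..t+1})"
    unfolding T_def by (rule integral_has_real_derivative) (use assms h_cont in auto)
  then show ?thesis by (rule deriv_interior) (use assms in auto)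
qed

lemma T_cont: "good f \<Longrightarrow> continuous_on {0..b} (T f)"
  unfolding T_def by (rule indefinite_integral_continuous_1) (rule h_int)

lemma T_nn: assumes "good f" "r \<ge> 0" shows "0 \<le> T f r"
  unfolding T_def by (rule integral_nonneg) (use assms h_int h_nn in auto)

lemma T_le: assumes "good f" "r \<ge> 0" shows "T f r \<le> E r - 1"
  unfolding T_def
  by (rule has_integral_le[OF integrable_integral[OF h_int[OF assms(1)]] int_E[OF assms(2)]])
     (use assms h_le in auto)

lemma h_mono: assumes "good f" "good g" "\<And>t. t \<ge> 0 \<Longrightarrow> f t \<le> g t" "s \<ge> 0"
  shows "h f s \<le> h g s"
  unfolding h_def using Phi_mono[OF assms] p_def wnn[of s] assms(4)
  by (intro divide_right_mono) auto

lemma T_mono: assumes "good f" "good g" "\<And>t. t \<ge> 0 \<Longrightarrow> f t \<le> g t" "r \<ge> 0"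
  shows "T f r \<le> T g r"
  unfolding T_def
  by (rule integral_le) (use assms h_int h_mono in auto)

lemma good_step: assumes "good f" shows "good (\<lambda>r. 1 + T f r)"
  unfolding good_def using assms T_nn[OF assms] T_le[OF assms]
  by (auto intro!: continuous_intros T_cont add_nonneg_nonneg simp: algebra_simps)


primrec zs :: "nat \<Rightarrow> real \<Rightarrow> real" where
  "zs 0 = (\<lambda>r. 1)"
| "zs (Suc n) = (\<lambda>r. 1 + T (zs n) r)"

lemma zs_good: "good (zs n)"
proof (induction n)
  case 0 then show ?case unfolding good_def using E_ge1 by auto
next
  case (Suc n) then show ?case using good_step by simp
qed

lemma zs_mono: "r \<ge> 0 \<Longrightarrow> zs n r \<le> zs (Suc n) r"
proof (induction n arbitrary: r)
  case 0 then show ?case using T_nn[OF zs_good[of 0]] by simp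
next
  case (Suc n)
  have "T (zs n) r \<le> T (zs (Suc n)) r" by (rule T_mono[OF zs_good zs_good]) (use Suc in auto)
  then show ?case by simp
qed

lemma zs_ge1: "r \<ge> 0 \<Longrightarrow> 1 \<le> zs n r"
  by (cases n) (auto intro: T_nn zs_good)

definition "zl r = (SUP n. zs n r)"

lemma zs_lim: assumes "r \<ge> 0" shows "(\<lambda>n. zs n r) \<longlonglongrightarrow> zl r"
  unfolding zl_def
proof (rule LIMSEQ_incseq_SUP)
  show "bdd_above (range (\<lambda>n. zs n r))"
    using good_le[OF zs_good assms] by (intro bdd_aboveI[of _ "E r"]) auto
  show "incseq (\<lambda>n. zs n r)" using zs_mono[OF assms] by (intro incseq_SucI) auto
qed

lemma zl_ge1: "r \<ge> 0 \<Longrightarrow> 1 \<le> zl r"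
  by (rule LIMSEQ_le_const[OF zs_lim]) (auto intro: zs_ge1)

lemma zl_le: "r \<ge> 0 \<Longrightarrow> zl r \<le> E r"
  by (rule LIMSEQ_le_const2[OF zs_lim]) (auto intro: good_le zs_good)

lemma Phi_lim: assumes "s \<ge> 0"
  shows "(\<lambda>t. q t * zl t) integrable_on {0..s} \<and> (\<lambda>n. Phi (zs n) s) \<longlonglongrightarrow> Phi zl s"
  unfolding Phi_def
proof (rule monotone_convergence_increasing)
  show "\<And>k. (\<lambda>t. q t * zs k t) integrable_on {0..s}" by (rule qf_int[OF zs_good])
  show "\<And>k x. x \<in> {0..s} \<Longrightarrow> q x * zs k x \<le> q x * zs (Suc k) x"
    using zs_mono q_nn by (auto intro: mult_left_mono)
  show "\<And>x. x \<in> {0..s} \<Longrightarrow> (\<lambda>k. q x * zs k x) \<longlonglongrightarrow> q x * zl x"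
    using zs_lim by (auto intro: tendsto_mult_left)
  show "bounded (range (\<lambda>k. integral {0..s} (\<lambda>t. q t * zs k t)))"
  proof (rule boundedI)
    fix x assume "x \<in> range (\<lambda>k. integral {0..s} (\<lambda>t. q t * zs k t))"
    then obtain k where k: "x = Phi (zs k) s" unfolding Phi_def by auto
    show "norm x \<le> E s * (w s)^4 * s^2"
      using k Phi_nn[OF zs_good assms] Phi_le[OF zs_good assms] by auto
  qed
qed

lemma T_lim: assumes "r \<ge> 0"
  shows "h zl integrable_on {0..r} \<and> (\<lambda>n. T (zs n) r) \<longlonglongrightarrow> T zl r"
  unfolding T_def
proof (rule monotone_convergence_increasing)
  show "\<And>k. h (zs k) integrable_on {0..r}" by (rule h_int[OF zs_good])
  show "h (zs k) x \<le> h (zs (Suc k)) x" if "x \<in> {0..r}" for k x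
    by (rule h_mono[OF zs_good zs_good]) (use zs_mono that in auto)
  show "\<And>x. x \<in> {0..r} \<Longrightarrow> (\<lambda>k. h (zs k) x) \<longlonglongrightarrow> h zl x"
    unfolding h_def divide_inverse using Phi_lim by (auto intro: tendsto_mult_right)
  show "bounded (range (\<lambda>k. integral {0..r} (h (zs k))))"
  proof (rule boundedI)
    fix x assume "x \<in> range (\<lambda>k. integral {0..r} (h (zs k)))"
    then obtain k where k: "x = T (zs k) r" unfolding T_def by auto
    show "norm x \<le> E r"
      using k T_nn[OF zs_good assms, of k] T_le[OF zs_good assms, of k] by auto
  qed
qed

lemma zl_fix: assumes "r \<ge> 0" shows "zl r = 1 + T zl r"
proof -
  have "(\<lambda>n. zs (Suc n) r) \<longlonglongrightarrow> 1 + T zl r"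
    using T_lim[OF assms] by (auto intro: tendsto_add)
  moreover have "(\<lambda>n. zs (Suc n) r) \<longlonglongrightarrow> zl r"
    using zs_lim[OF assms] by (rule LIMSEQ_Suc)
  ultimately show ?thesis using LIMSEQ_unique by blast
qed

lemma zl_good: "good zl"
  unfolding good_def
proof (intro conjI allI impI)
  fix b :: real
  show "continuous_on {0..b} zl"
  proof (cases "b \<ge> 0")
    case True
    have "continuous_on {0..b} (\<lambda>r. 1 + T zl r)" unfolding T_def
      by (intro continuous_intros indefinite_integral_continuous_1) (use T_lim[OF True] in blast)
    then show ?thesis by (rule continuous_on_cong[THEN iffD1, rotated 2]) (auto simp: zl_fix)
  qed auto
next
  fix r :: real assume "r \<ge> 0"
  then show "0 \<le> zl r" "zl r \<le> E r" using zl_ge1 zl_le by (auto intro: order_trans[of 0 1])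
qed

definition "pd r = (w r)^2 + 2 * r * w r * w' r"
definition "zl'' r = (q r * zl r * p r - Phi zl r * pd r) / (p r * p r)"

lemma zl_deriv: assumes "r > 0" shows "(zl has_real_derivative h zl r) (at r)"
proof (rule has_field_derivative_transform_within_open[of "\<lambda>x. 1 + T zl x" _ _ "{0<..}"])
  show "((\<lambda>x. 1 + T zl x) has_real_derivative h zl r) (at r)"
    using T_deriv[OF zl_good assms] by (auto intro!: derivative_eq_intros)
qed (use assms zl_fix in auto)

lemma zl'_deriv: assumes "r > 0" shows "(h zl has_real_derivative zl'' r) (at r)"
proof -
  have "((\<lambda>s. Phi zl s / p s) has_real_derivative zl'' r) (at r)"
    unfolding zl''_def pd_def
    by (rule DERIV_divide[OF Phi_deriv[OF zl_good assms] p_deriv[OF assms]]) (use p_pos[OF assms] in auto)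
  then show ?thesis unfolding h_def[abs_def] .
qed

lemma zl_ode: assumes "r > 0"
  shows "zl'' r + (2 * w' r / w r + 1 / r) * h zl r - 2 * (w r)\<^sup>2 * zl r = 0"
proof -
  have "w r \<noteq> 0" "r \<noteq> 0" using wpos[OF assms] assms by auto
  then show ?thesis unfolding zl''_def h_def p_def q_def pd_def
    by (simp add: field_simps power2_eq_square power4_eq_xxxx)
qed

lemma zl_sol: "is_lin_sol w w' zl (h zl) zl''"
  unfolding is_lin_sol_def using zl_deriv zl'_deriv zl_ode by blast

end


locale Q = P +
  fixes w'' :: "real \<Rightarrow> real" and R0 C0 a0 \<delta> :: real
  assumes w'd: "\<And>r. r>0 \<Longrightarrow> (w' has_real_derivative w'' r) (at r)"
    and gl: "\<And>r. r>0 \<Longrightarrow> w'' r + w' r / r - w r / r\<^sup>2 + (1 - (w r)\<^sup>2) * w r = 0"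
    and winf: "\<And>r. r \<ge> R0 \<Longrightarrow> \<bar>w r - (1 - 1 / (2 * r\<^sup>2))\<bar> \<le> C0 / r^4"
    and R0pos: "R0 > 0" and C0nn: "C0 \<ge> 0"
    and wzero: "\<And>r. 0 < r \<Longrightarrow> r < \<delta> \<Longrightarrow> a0 * r \<le> w r"
    and a0pos: "a0 > 0" and \<delta>pos: "\<delta> > 0"
begin

definition "u r = sqrt r * w r * zl r"
definition "u' r = zl r * w r / (2 * sqrt r) + sqrt r * w' r * zl r + sqrt r * w r * h zl r"
definition "Qf r = 3*(w r)^2 - 1 + 3/(4*r^2)"

lemma u_deriv: assumes "r > 0" shows "(u has_real_derivative u' r) (at r)"
  unfolding u_def[abs_def] u'_def using assms
  by (auto intro!: derivative_eq_intros wd zl_deriv simp: field_simps)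

lemma u'_deriv: assumes r: "r > 0" shows "(u' has_real_derivative Qf r * u r) (at r)"
proof -
  have wr: "w r > 0" using wpos[OF r] .
  have e1: "w'' r = - w' r / r + w r / r\<^sup>2 - (1 - (w r)\<^sup>2) * w r" using gl[OF r] by (simp add: algebra_simps)
  have e2: "zl'' r = - (2 * w' r / w r + 1 / r) * h zl r + 2 * (w r)\<^sup>2 * zl r"
    using zl_ode[OF r] by (simp add: algebra_simps)
  have s: "sqrt r > 0" "sqrt r * sqrt r = r" using r by auto
  have key: "\<And>(x::real) W W' Z Z'. x > 0 \<Longrightarrow> W > 0 \<Longrightarrow> ((Z'*W + W'*Z)*(2*x) - Z*W*inverse x)/(4*(x*x)) + ((inverse x * W'/2 + (-W'/(x*x) + W/(x*x)\<^sup>2 - (1-W\<^sup>2)*W)*x)*Z + Z'*(x*W')) + ((inverse x*W/2 + W'*x)*Z' + (-(2*W'/W + 1/(x*x))*Z' + 2*W\<^sup>2*Z)*(x*W)) = (3*W\<^sup>2 - 1 + 3/(4*(x*x)\<^sup>2))*(x*W*Z)"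
    by (simp add: field_simps power2_eq_square)
  have rr: "r = sqrt r * sqrt r" using s by simp
  show ?thesis
    unfolding u'_def[abs_def]
    using r apply (auto intro!: derivative_eq_intros wd w'd zl_deriv zl'_deriv)
    using key[where x="sqrt r" and W="w r" and W'="w' r" and Z="zl r" and Z'="h zl r", OF s(1) wr] r unfolding Qf_def u_def e1 e2
    by (simp add: abs_of_pos)
qed


lemma u_pos: "r > 0 \<Longrightarrow> u r > 0"
  unfolding u_def using wpos zl_ge1[of r] by (simp add: mult_pos_pos)

lemma u'_nn: assumes "r > 0" shows "u' r \<ge> 0"
proof -
  have "zl r \<ge> 1" "w r > 0" "w' r > 0" "h zl r \<ge> 0" "sqrt r > 0"
    using assms zl_ge1 wpos w'pos h_nn[OF zl_good] by auto
  then show ?thesis unfolding u'_def by (simp add: add_nonneg_nonneg)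
qed

lemma u_mono: assumes "0 < a" "a \<le> t" shows "u a \<le> u t"
  by (rule deriv_nonneg_imp_mono[of a t u u']) (use assms u_deriv u'_nn in auto)

definition "R = max R0 (max 1 (2 * sqrt C0))"

lemma R_ge: "R \<ge> R0" "R \<ge> 1" "R > 0" unfolding R_def using R0pos by auto

lemma R_sq: assumes "r \<ge> R" shows "4 * C0 \<le> r^2"
proof -
  have "2 * sqrt C0 \<le> r" using assms unfolding R_def by auto
  then have "(2 * sqrt C0)^2 \<le> r^2" by (rule power_mono) (simp add: C0nn)
  then show ?thesis using C0nn by (simp add: power_mult_distrib)
qed

lemma wbnd: assumes "r \<ge> R" shows "w r - 1 \<le> - (1/r^2)/4" "w r - 1 \<ge> - 3*(1/r^2)/4"
proof -
  have r: "r > 0" "r \<ge> R0" using assms R_ge by auto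
  have a: "\<bar>w r - (1 - 1 / (2 * r\<^sup>2))\<bar> \<le> C0 / r^4" using winf r by auto
  have "C0 / r^4 \<le> (1/r^2)/4"
  proof -
    have h1: "C0/r^2 \<le> 1/4" using R_sq[OF assms] r by (simp add: field_simps)
    have "C0 / r^4 = (C0/r^2) * (1/r^2)" by (simp add: power4_eq_xxxx power2_eq_square)
    also have "\<dots> \<le> (1/4)*(1/r^2)" by (rule mult_right_mono[OF h1]) simp
    finally show ?thesis by simp
  qed
  moreover have "1 / (2 * r\<^sup>2) = (1/r^2)/2" by simp
  ultimately show "w r - 1 \<le> - (1/r^2)/4" "w r - 1 \<ge> - 3*(1/r^2)/4" using a by (auto simp: abs_le_iff)
qed

lemma Qf_le: assumes "r \<ge> R" shows "Qf r \<le> 2"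
proof -
  have r: "r > 0" using assms R_ge by auto
  define x where "x = w r"
  define e where "e = 1/r^2"
  have x: "0 \<le> x" "x - 1 \<le> - e/4" using wnn[of r] r wbnd[OF assms] unfolding x_def e_def by auto
  have e: "e \<ge> 0" unfolding e_def by simp
  have "(x-1)*x \<le> 0" using x e by (intro mult_nonpos_nonneg) auto
  then have "x^2 - 1 \<le> - e/4" using x by (simp add: power2_eq_square algebra_simps)
  moreover have "Qf r = 3*x^2 - 1 + 3*e/4" unfolding Qf_def x_def e_def by simp
  ultimately show ?thesis by simp
qed

lemma Qf_ge: assumes "r \<ge> R" shows "Qf r \<ge> 2 - 4/r^2"
proof -
  have r: "r > 0" using assms R_ge by auto
  define x where "x = w r"
  define e where "e = 1/r^2"
  have x: "x - 1 \<ge> - 3*e/4" using wbnd[OF assms] unfolding x_def e_def by auto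
  have e: "e \<ge> 0" unfolding e_def by simp
  have "0 \<le> (x-1)^2" by simp
  then have "x^2 - 1 \<ge> 2*(x-1)" by (simp add: power2_eq_square algebra_simps)
  moreover have "Qf r = 3*x^2 - 1 + 3*e/4" unfolding Qf_def x_def e_def by simp
  moreover have "4/r^2 = 4*e" unfolding e_def by simp
  ultimately show ?thesis using x e by simp
qed

definition "g r = (u' r + sqrt 2 * u r) * exp (- sqrt 2 * r)"

lemma g_deriv: assumes "r > 0"
  shows "(g has_real_derivative (Qf r - 2) * u r * exp (- sqrt 2 * r)) (at r)"
  unfolding g_def[abs_def] using assms
  by (auto intro!: derivative_eq_intros u_deriv u'_deriv simp: algebra_simps)

lemma g_ge: assumes "r > 0" shows "g r \<ge> u r * exp (- sqrt 2 * r)"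
proof -
  have "u r \<le> u' r + sqrt 2 * u r"
  proof -
    have "u r \<le> sqrt 2 * u r" using u_pos[OF assms] by (simp add: mult_le_cancel_right1)
    then show ?thesis using u'_nn[OF assms] by simp
  qed
  then show ?thesis unfolding g_def by (simp add: mult_right_mono)
qed

lemma g_pos: "r > 0 \<Longrightarrow> g r > 0"
  using g_ge[of r] u_pos[of r] by (smt (verit) exp_gt_zero mult_pos_pos)

lemma g_dec: assumes "R \<le> r" shows "g r \<le> g R"
proof (rule deriv_nonpos_imp_antimono[of R r g])
  fix x assume x: "x \<in> {R..r}"
  then have "x > 0" using R_ge by auto
  then show "(g has_real_derivative (Qf x - 2) * u x * exp (- sqrt 2 * x)) (at x)" by (rule g_deriv)
  have "Qf x - 2 \<le> 0" using Qf_le x by auto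
  then show "(Qf x - 2) * u x * exp (- sqrt 2 * x) \<le> 0"
    using u_pos[OF \<open>x>0\<close>] by (simp add: mult_nonpos_nonneg)
qed (use assms in auto)

lemma g_low: assumes "R \<le> r" shows "g R * exp (-4/R) \<le> g r"
proof -
  let ?G = "\<lambda>x. g x * exp (-4/x)"
  have "?G R \<le> ?G r"
  proof (rule deriv_nonneg_imp_mono[of R r ?G "\<lambda>x. exp (-4/x) * ((Qf x - 2) * u x * exp (- sqrt 2 * x) + 4/x^2 * g x)"])
    fix x assume x: "x \<in> {R..r}"
    then have xp: "x > 0" using R_ge by auto
    show "(?G has_real_derivative exp (-4/x) * ((Qf x - 2) * u x * exp (- sqrt 2 * x) + 4/x^2 * g x)) (at x)"
      using xp by (auto intro!: derivative_eq_intros g_deriv simp: field_simps power2_eq_square)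
    have "(Qf x - 2) * (u x * exp (- sqrt 2 * x)) \<ge> (- 4/x^2) * (u x * exp (- sqrt 2 * x))"
      using Qf_ge[of x] x u_pos[OF xp] by (intro mult_right_mono) auto
    moreover have "(- 4/x^2) * (u x * exp (- sqrt 2 * x)) \<ge> (- 4/x^2) * g x"
      using g_ge[OF xp] by (intro mult_left_mono_neg) auto
    ultimately have "(Qf x - 2) * u x * exp (- sqrt 2 * x) + 4/x^2 * g x \<ge> 0" by (simp add: algebra_simps)
    then show "0 \<le> exp (-4/x) * ((Qf x - 2) * u x * exp (- sqrt 2 * x) + 4/x^2 * g x)" by simp
  qed (use assms in auto)
  also have "?G r \<le> g r"
  proof -
    have "exp (-4/r) \<le> 1" using assms R_ge by simp
    then show ?thesis using g_pos[of r] assms R_ge by (simp add: mult_left_le)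
  qed
  finally show ?thesis .
qed


lemma s2: "sqrt 2 * (sqrt 2 * x) = 2 * x" by (simp add: mult.assoc[symmetric])

lemma g_exp: "x > 0 \<Longrightarrow> (u' x + sqrt 2 * u x) * exp (sqrt 2 * x) = g x * exp (sqrt 2 * x)^2"
  unfolding g_def by (simp add: exp_minus field_simps power2_eq_square)

lemma H_deriv: assumes "x > 0"
  shows "((\<lambda>x. u x * exp (sqrt 2 * x) - c * exp (sqrt 2 * x)^2 / (2 * sqrt 2)) has_real_derivative
          exp (sqrt 2 * x)^2 * (g x - c)) (at x)"
proof -
  have "((\<lambda>x. u x * exp (sqrt 2 * x) - c * exp (sqrt 2 * x)^2 / (2 * sqrt 2)) has_real_derivative
          (u' x + sqrt 2 * u x) * exp (sqrt 2 * x) - c * exp (sqrt 2 * x)^2) (at x)"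
    using assms by (auto intro!: derivative_eq_intros u_deriv simp: field_simps power2_eq_square s2)
  then show ?thesis using g_exp[OF assms] by (simp add: algebra_simps)
qed

lemma u_up: obtains Cu where "Cu > 0" "\<And>r. r \<ge> R \<Longrightarrow> u r \<le> Cu * exp (sqrt 2 * r)"
proof -
  define G0 where "G0 = g R"
  define H where "H = (\<lambda>x. u x * exp (sqrt 2 * x) - G0 * exp (sqrt 2 * x)^2 / (2 * sqrt 2))"
  have G0: "G0 > 0" unfolding G0_def using g_pos R_ge by auto
  have "u r \<le> (\<bar>H R\<bar> + G0) * exp (sqrt 2 * r)" if r: "r \<ge> R" for r
  proof -
    have "H r \<le> H R"
    proof (rule deriv_nonpos_imp_antimono[of R r H])
      fix x assume x: "x \<in> {R..r}"
      then have "x > 0" using R_ge by auto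
      then show "(H has_real_derivative exp (sqrt 2 * x)^2 * (g x - G0)) (at x)"
        unfolding H_def by (rule H_deriv)
      show "exp (sqrt 2 * x)^2 * (g x - G0) \<le> 0" using g_dec[of x] x unfolding G0_def
        by (simp add: mult_nonneg_nonpos)
    qed (use r in auto)
    define e where "e = exp (sqrt 2 * r)"
    have e: "e \<ge> 1" unfolding e_def using r R_ge by simp
    have "u r * e \<le> H R + G0 * e^2 / (2 * sqrt 2)" using \<open>H r \<le> H R\<close> unfolding H_def e_def by simp
    then have "u r \<le> H R / e + G0 * e / (2 * sqrt 2)" using e by (simp add: field_simps power2_eq_square)
    also have "H R / e \<le> \<bar>H R\<bar> * e"
    proof -
      have "H R / e \<le> \<bar>H R\<bar>" using e by (simp add: divide_le_eq) (smt (verit) mult_le_cancel_left1)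
      also have "\<dots> \<le> \<bar>H R\<bar> * e" using e by (simp add: mult_le_cancel_left1)
      finally show ?thesis .
    qed
    also have "G0 * e / (2 * sqrt 2) \<le> G0 * e"
    proof -
      have "1 \<le> sqrt 2" by simp
      then have "1 \<le> 2 * sqrt 2" by linarith
      then have "G0 * e / (2 * sqrt 2) \<le> G0 * e / 1" using G0 e by (intro divide_left_mono) auto
      then show ?thesis by simp
    qed
    finally show ?thesis unfolding e_def by (simp add: algebra_simps)
  qed
  moreover have "\<bar>H R\<bar> + G0 > 0" using G0 by simp
  ultimately show ?thesis using that by blast
qed

lemma u_low: obtains c1 where "c1 > 0" "\<And>r. r \<ge> R + 1 \<Longrightarrow> c1 * exp (sqrt 2 * r) \<le> u r"
proof -
  define c0 where "c0 = g R * exp (-4/R)"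
  define H where "H = (\<lambda>x. u x * exp (sqrt 2 * x) - c0 * exp (sqrt 2 * x)^2 / (2 * sqrt 2))"
  have c0: "c0 > 0" unfolding c0_def using g_pos R_ge by auto
  have "c0/8 * exp (sqrt 2 * r) \<le> u r" if r: "r \<ge> R + 1" for r
  proof -
    have "H R \<le> H r"
    proof (rule deriv_nonneg_imp_mono[of R r H])
      fix x assume x: "x \<in> {R..r}"
      then have "x > 0" using R_ge by auto
      then show "(H has_real_derivative exp (sqrt 2 * x)^2 * (g x - c0)) (at x)"
        unfolding H_def by (rule H_deriv)
      show "exp (sqrt 2 * x)^2 * (g x - c0) \<ge> 0" using g_low[of x] x unfolding c0_def
        by simp
    qed (use r in auto)
    define e where "e = exp (sqrt 2 * r)"
    define eR where "eR = exp (sqrt 2 * R)"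
    have eR: "eR > 0" unfolding eR_def by simp
    have "H R \<ge> - c0 * eR^2 / (2 * sqrt 2)" unfolding H_def eR_def using u_pos[of R] R_ge by simp
    then have A0: "u r * e - c0 * e^2/(2* sqrt 2) \<ge> - c0 * eR^2/(2* sqrt 2)"
      using \<open>H R \<le> H r\<close> unfolding H_def e_def eR_def by linarith
    have "c0 * (e^2 - eR^2)/(2* sqrt 2) = c0*e^2/(2* sqrt 2) - c0 * eR^2/(2* sqrt 2)"
      by (simp add: right_diff_distrib diff_divide_distrib)
    with A0 have A: "u r * e \<ge> c0 * (e^2 - eR^2) / (2 * sqrt 2)" by linarith
    have "sqrt 2 * R + sqrt 2 \<le> sqrt 2 * r" using r
      by (metis mult.right_neutral distrib_left mult_left_mono real_sqrt_ge_zero zero_le_numeral add.commute)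
    then have "e \<ge> eR * exp (sqrt 2)" unfolding e_def eR_def
      by (simp add: exp_add[symmetric])
    moreover have "exp (sqrt 2) \<ge> sqrt 2" by (smt (verit) exp_ge_add_one_self)
    ultimately have "e \<ge> eR * sqrt 2" using eR by (smt (verit) mult_left_mono)
    then have "e^2 \<ge> (eR * sqrt 2)^2" using eR by (intro power_mono) auto
    then have "e^2 \<ge> 2 * eR^2" by (simp add: power_mult_distrib)
    then have "e^2 - eR^2 \<ge> e^2/2" by simp
    then have "c0 * (e^2 - eR^2) / (2 * sqrt 2) \<ge> c0 * (e^2/2) / (2 * sqrt 2)" using c0
      by (intro divide_right_mono mult_left_mono) auto
    with A have "u r * e \<ge> c0 * e^2 / (4 * sqrt 2)" by (simp add: field_simps)
    moreover have "e > 0" unfolding e_def by simp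
    ultimately have B: "u r \<ge> c0 * e / (4 * sqrt 2)" by (simp add: field_simps power2_eq_square)
    have "sqrt 2 \<le> 2" by (smt (verit) real_sqrt_le_iff real_sqrt_four)
    then have C: "c0 * e / 8 \<le> c0 * e / (4 * sqrt 2)" using c0 \<open>e > 0\<close>
      by (intro divide_left_mono) auto
    from order_trans[OF C B] show ?thesis unfolding e_def by simp
  qed
  then show ?thesis using that c0 by (metis divide_pos_pos zero_less_numeral)
qed


lemma u_low_all: assumes a: "a > 0" obtains ca where "ca > 0" "\<And>t. t \<ge> a \<Longrightarrow> ca * exp (sqrt 2 * t) \<le> u t"
proof -
  obtain c1 where c1: "c1 > 0" "\<And>r. r \<ge> R + 1 \<Longrightarrow> c1 * exp (sqrt 2 * r) \<le> u r" by (rule u_low) blast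
  define ca where "ca = min c1 (u a * exp (- sqrt 2 * (R + 1)))"
  have ca: "ca > 0" unfolding ca_def using c1 u_pos[OF a] by simp
  have "ca * exp (sqrt 2 * t) \<le> u t" if t: "t \<ge> a" for t
  proof (cases "t \<ge> R + 1")
    case True
    have "ca * exp (sqrt 2 * t) \<le> c1 * exp (sqrt 2 * t)" unfolding ca_def by (intro mult_right_mono) auto
    then show ?thesis using c1(2)[OF True] by linarith
  next
    case False
    have "ca * exp (sqrt 2 * t) \<le> (u a * exp (- sqrt 2 * (R + 1))) * exp (sqrt 2 * t)"
      unfolding ca_def by (intro mult_right_mono) auto
    also have "\<dots> = u a * exp (sqrt 2 * (t - (R + 1)))" by (simp add: exp_add[symmetric] algebra_simps)
    also have "\<dots> \<le> u a * 1"
      using False u_pos[OF a] by (intro mult_left_mono) (auto simp: mult_nonneg_nonpos)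
    also have "\<dots> \<le> u t" using u_mono[OF a t] by simp
    finally show ?thesis .
  qed
  then show ?thesis using that ca by blast
qed

definition "f t = 1 / (u t)^2"

lemma u_isCont: "t > 0 \<Longrightarrow> isCont u t" using u_deriv DERIV_isCont by blast

lemma f_isCont: "t > 0 \<Longrightarrow> isCont f t"
  unfolding f_def[abs_def] using u_pos[of t] by (intro continuous_intros u_isCont) auto

lemma f_cont: "a > 0 \<Longrightarrow> continuous_on {a..b} f"
  by (intro continuous_at_imp_continuous_on ballI f_isCont) auto

lemma f_pos: "t > 0 \<Longrightarrow> f t > 0" unfolding f_def using u_pos[of t] by simp

lemma f_le_exp: assumes "ca > 0" "ca * exp (sqrt 2 * t) \<le> u t"
  shows "f t \<le> (1/ca^2) * exp (- (2 * sqrt 2) * t)"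
proof -
  have A: "(ca * exp (sqrt 2 * t))^2 \<le> (u t)^2" using assms by (intro power_mono) auto
  have B: "ca * exp (sqrt 2 * t) > 0" using assms by simp
  have ut: "u t > 0" using B assms(2) by linarith
  have "1/(u t)^2 \<le> 1/(ca * exp (sqrt 2 * t))^2"
    by (rule divide_left_mono[OF A]) (use B ut in \<open>auto intro!: mult_pos_pos\<close>)
  also have "\<dots> = (1/ca^2) * exp (- (2 * sqrt 2) * t)"
    by (simp add: power_mult_distrib exp_minus field_simps power2_eq_square exp_add[symmetric])
  finally show ?thesis unfolding f_def .
qed

lemma f_int: assumes a: "a > 0" shows "f integrable_on {a..}"
proof -
  obtain ca where ca: "ca > 0" "\<And>t. t \<ge> a \<Longrightarrow> ca * exp (sqrt 2 * t) \<le> u t" by (rule u_low_all[OF a]) blast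
  show ?thesis
  proof (rule integrable_on_all_intervals_integrable_bound[where g = "\<lambda>t. (1/ca^2) * exp (- (2 * sqrt 2) * t)"])
    fix c d :: real
    have "f integrable_on {max a c..d}" using a by (intro integrable_continuous_real f_cont) auto
    moreover have eq: "{a..} \<inter> cbox c d = {max a c..d}" by auto
    ultimately show "(\<lambda>x. if x \<in> {a..} then f x else 0) integrable_on cbox c d"
      by (subst integrable_restrict_Int) (simp only: eq)
  next
    fix x assume x: "x \<in> {a..}"
    then show "norm (f x) \<le> (1/ca^2) * exp (- (2 * sqrt 2) * x)"
      using f_le_exp[OF ca(1) ca(2)] f_pos[of x] a by auto
  next
    show "(\<lambda>t. (1/ca^2) * exp (- (2 * sqrt 2) * t)) integrable_on {a..}"
      using integrable_on_cmult_left[OF integrable_on_exp_minus_to_infinity[of "2 * sqrt 2" a], of "1/ca^2"]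
      by simp
  qed
qed

definition "I r = integral {r..} f"

lemma I_split: assumes "0 < x" "x \<le> b" shows "I x = integral {x..b} f + I b"
proof -
  have "(f has_integral integral {x..b} f) {x..b}" using assms by (intro integrable_integral integrable_continuous_real f_cont) auto
  moreover have "(f has_integral I b) {b..}" unfolding I_def using assms by (intro integrable_integral f_int) auto
  ultimately have "(f has_integral (integral {x..b} f + I b)) ({x..b} \<union> {b..})"
    by (rule has_integral_Un) (use assms in \<open>auto intro: negligible_subset[OF negligible_sing[of b]]\<close>)
  moreover have "{x..b} \<union> {b..} = {x..}" using assms by auto
  ultimately show ?thesis unfolding I_def by (simp add: integral_unique)
qed

lemma I_deriv: assumes r: "r > 0" shows "(I has_real_derivative - f r) (at r)"
proof -
  have "((\<lambda>x. integral {x..r+1} f) has_real_derivative - f r) (at r within {r/2..r+1})"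
    by (rule integral_has_real_derivative') (use r f_cont in auto)
  then have "((\<lambda>x. integral {x..r+1} f) has_real_derivative - f r) (at r)"
    by (rule deriv_interior) (use r in auto)
  then have "((\<lambda>x. integral {x..r+1} f + I (r+1)) has_real_derivative - f r) (at r)"
    by (auto intro!: derivative_eq_intros)
  then show ?thesis
  proof (rule has_field_derivative_transform_within_open[where S = "{r/2<..<r+1}"])
    fix x assume "x \<in> {r/2<..<r+1}"
    then show "integral {x..r+1} f + I (r+1) = I x" using r I_split[of x "r+1"] by auto
  qed (use r in auto)
qed

lemma I_nn: "r > 0 \<Longrightarrow> I r \<ge> 0"
  unfolding I_def by (rule integral_nonneg) (use f_int f_pos in \<open>auto intro: less_imp_le\<close>)

lemma I_pos: "I 1 > 0"
proof -
  have "integral {1..2::real} (\<lambda>_. 1/(u 2)^2) \<le> integral {1..2} f"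
  proof (rule integral_le)
    show "f integrable_on {1..2}" by (intro integrable_continuous_real f_cont) auto
    fix t :: real assume t: "t \<in> {1..2}"
    have "u t \<le> u 2" "u t > 0" using u_mono[of t 2] u_pos[of t] t by auto
    then have "(u t)^2 \<le> (u 2)^2" by (intro power_mono) auto
    then show "1/(u 2)^2 \<le> f t" unfolding f_def using \<open>u t > 0\<close> u_pos[of 2] by (intro divide_left_mono) auto
  qed auto
  moreover have "integral {1..2::real} (\<lambda>_. 1/(u 2)^2) > 0" using u_pos[of 2] by simp
  moreover have "0 < 1/(u 2)^2" using u_pos[of 2] by simp
  ultimately show ?thesis using I_split[of 1 2] I_nn[of 2] by linarith
qed

lemma I_up: obtains ci where "ci > 0" "\<And>r. r \<ge> R + 1 \<Longrightarrow> I r \<le> exp (- (2 * sqrt 2) * r) / ci"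
proof -
  obtain c1 where c1: "c1 > 0" "\<And>r. r \<ge> R + 1 \<Longrightarrow> c1 * exp (sqrt 2 * r) \<le> u r" by (rule u_low) blast
  have "I r \<le> exp (- (2 * sqrt 2) * r) / (c1^2 * (2 * sqrt 2))" if r: "r \<ge> R + 1" for r
  proof -
    have i: "((\<lambda>t. (1/c1^2) * exp (- (2 * sqrt 2) * t)) has_integral (1/c1^2) * (exp (- (2 * sqrt 2) * r) / (2 * sqrt 2))) {r..}"
      by (intro has_integral_mult_right has_integral_exp_minus_to_infinity) simp
    have "I r \<le> (1/c1^2) * (exp (- (2 * sqrt 2) * r) / (2 * sqrt 2))"
      unfolding I_def
    proof (rule has_integral_le[OF integrable_integral i])
      show "f integrable_on {r..}" using r R_ge by (intro f_int) auto
      fix t assume "t \<in> {r..}"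
      then show "f t \<le> (1/c1^2) * exp (- (2 * sqrt 2) * t)" using r by (intro f_le_exp c1) auto
    qed
    then show ?thesis by (simp add: field_simps)
  qed
  moreover have "c1^2 * (2 * sqrt 2) > 0" using c1 by simp
  ultimately show ?thesis using that by blast
qed

definition "d1 = min (\<delta>/2) 1"

lemma d1: "d1 > 0" "d1 < \<delta>" "d1 \<le> 1" unfolding d1_def using \<delta>pos by auto

lemma I_near0: assumes r: "0 < r" "r \<le> d1" shows "I r \<le> (1/(2*a0^2) + I d1) / r^2"
proof -
  have fle: "f t \<le> 1/(a0^2 * t^3)" if t: "0 < t" "t \<le> d1" for t
  proof -
    have wt: "a0 * t \<le> w t" using wzero[of t] t d1 by auto
    have "(a0 * t)^2 \<le> (w t)^2" using wt a0pos t by (intro power_mono) auto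
    moreover have "(w t)^2 \<le> (w t)^2 * (zl t)^2"
      using zl_ge1[of t] t by (simp add: mult_le_cancel_left1 one_le_power)
    ultimately have "t * (a0 * t)^2 \<le> t * ((w t)^2 * (zl t)^2)" using t by (intro mult_left_mono) auto
    moreover have "(u t)^2 = t * ((w t)^2 * (zl t)^2)" unfolding u_def using t
      by (simp add: power_mult_distrib)
    ultimately have "a0^2 * t^3 \<le> (u t)^2" by (simp add: power_mult_distrib power3_eq_cube power2_eq_square algebra_simps)
    then show ?thesis unfolding f_def using a0pos t u_pos[of t] by (intro divide_left_mono mult_pos_pos) auto
  qed
  have i: "((\<lambda>t. 1/(a0^2 * t^3)) has_integral ((- 1/(2*a0^2*d1^2)) - (- 1/(2*a0^2*r^2)))) {r..d1}"
  proof (rule fundamental_theorem_of_calculus)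
    show "r \<le> d1" by (rule r(2))
    fix x assume x: "x \<in> {r..d1}"
    then have "x > 0" using r by auto
    then have "((\<lambda>t. - 1/(2*a0^2*t^2)) has_real_derivative 1/(a0^2 * x^3)) (at x)"
      using a0pos by (auto intro!: derivative_eq_intros simp: field_simps power2_eq_square power3_eq_cube)
    then show "((\<lambda>t. - 1/(2*a0^2*t^2)) has_vector_derivative 1/(a0^2 * x^3)) (at x within {r..d1})"
      by (simp add: has_real_derivative_iff_has_vector_derivative[symmetric] has_field_derivative_at_within)
  qed
  have "integral {r..d1} f \<le> (- 1/(2*a0^2*d1^2)) - (- 1/(2*a0^2*r^2))"
  proof (rule has_integral_le[OF integrable_integral i])
    show "f integrable_on {r..d1}" using r by (intro integrable_continuous_real f_cont) auto
  qed (use fle r in auto)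
  also have "\<dots> \<le> 1/(2*a0^2*r^2)" using d1 a0pos by simp
  finally have A: "integral {r..d1} f \<le> 1/(2*a0^2) / r^2" by simp
  have "I d1 \<le> I d1 / r^2"
  proof -
    have "r^2 \<le> 1" using r d1 by (simp add: power_le_one)
    then show ?thesis using I_nn[OF d1(1)] r by (simp add: le_divide_eq mult_left_le)
  qed
  then show ?thesis using A I_split[OF r] by (simp add: add_divide_distrib)
qed


definition "f' r = -2 * u' r / (u r)^3"
definition "z2 r = zl r * I r"
definition "z2' r = h zl r * I r - zl r * f r"
definition "z2'' r = zl'' r * I r - 2 * h zl r * f r - zl r * f' r"

lemma f_deriv: assumes r: "r > 0" shows "(f has_real_derivative f' r) (at r)"
  unfolding f_def[abs_def] f'_def using u_pos[OF r]
  by (auto intro!: derivative_eq_intros u_deriv r simp: field_simps power2_eq_square power3_eq_cube)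

lemma z2_sol: "is_lin_sol w w' z2 z2' z2''"
  unfolding is_lin_sol_def
proof (intro allI impI conjI)
  fix r :: real assume r: "r > 0"
  show "(z2 has_real_derivative z2' r) (at r)"
    unfolding z2_def[abs_def] z2'_def
    by (auto intro!: derivative_eq_intros zl_deriv I_deriv r)
  show "(z2' has_real_derivative z2'' r) (at r)"
    unfolding z2'_def[abs_def] z2''_def
    by (auto intro!: derivative_eq_intros zl_deriv I_deriv zl'_deriv f_deriv r simp: algebra_simps)
  define P where "P = 2 * w' r / w r + 1 / r"
  have A: "zl'' r + P * h zl r - 2 * (w r)\<^sup>2 * zl r = 0" using zl_ode[OF r] unfolding P_def .
  have B: "- 2 * h zl r * f r - zl r * f' r - P * zl r * f r = 0"
  proof -
    have key2: "\<And>(x::real) W W' Z H. x > 0 \<Longrightarrow> W > 0 \<Longrightarrow> Z > 0 \<Longrightarrow>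
       -2*H*(1/(x*W*Z)^2) - Z*(-2*(Z*W/(2*x) + x*W'*Z + x*W*H)/(x*W*Z)^3) - (2*W'/W + 1/(x*x))*Z*(1/(x*W*Z)^2) = 0"
      by (simp add: field_simps power2_eq_square power3_eq_cube)
    have "sqrt r > 0" "w r > 0" "zl r > 0" using r wpos zl_ge1[of r] by auto
    from key2[where x="sqrt r" and W="w r" and W'="w' r" and Z="zl r" and H="h zl r", OF this]
    show ?thesis unfolding P_def f_def f'_def u_def u'_def using r
      by (simp add: mult.commute mult.left_commute mult.assoc)
  qed
  have "z2'' r + (2 * w' r / w r + 1 / r) * z2' r - 2 * (w r)\<^sup>2 * z2 r =
        I r * (zl'' r + P * h zl r - 2 * (w r)\<^sup>2 * zl r) + (- 2 * h zl r * f r - zl r * f' r - P * zl r * f r)"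
    unfolding z2''_def z2'_def z2_def P_def by (simp add: algebra_simps)
  then show "z2'' r + (2 * w' r / w r + 1 / r) * z2' r - 2 * (w r)\<^sup>2 * z2 r = 0" using A B by simp
qed

lemma w_quarter: "r \<ge> R \<Longrightarrow> w r \<ge> 1/4"
proof -
  assume r: "r \<ge> R"
  have "1/r^2 \<le> 1" using r R_ge by (simp add: power_le_one field_simps one_le_power)
  then have "-3*(1/r^2)/4 \<ge> -3/4" by simp
  then show ?thesis using wbnd(2)[OF r] by linarith
qed

lemma zl_up: obtains C where "C > 0" "\<And>r. r \<ge> R \<Longrightarrow> zl r \<le> C * (r powr (-1/2) * exp (sqrt 2 * r))"
proof -
  obtain Cu where Cu: "Cu > 0" "\<And>r. r \<ge> R \<Longrightarrow> u r \<le> Cu * exp (sqrt 2 * r)" by (rule u_up) blast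
  have "zl r \<le> (4 * Cu) * (r powr (-1/2) * exp (sqrt 2 * r))" if r: "r \<ge> R" for r
  proof -
    have rp: "r > 0" using r R_ge by auto
    have sw: "sqrt r * w r \<ge> sqrt r / 4" using w_quarter[OF r] rp by (simp add: mult_left_mono[of "1/4" "w r" "sqrt r", simplified])
    have "zl r = u r / (sqrt r * w r)" unfolding u_def using rp wpos[OF rp] by simp
    also have "\<dots> \<le> u r / (sqrt r / 4)" using sw u_pos[OF rp] rp by (intro divide_left_mono) auto
    also have "\<dots> \<le> Cu * exp (sqrt 2 * r) / (sqrt r / 4)" using Cu(2)[OF r] rp by (intro divide_right_mono) auto
    also have "\<dots> = (4 * Cu) * (r powr (-1/2) * exp (sqrt 2 * r))"
      using rp by (simp add: powr_minus_divide powr_half_sqrt field_simps)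
    finally show ?thesis .
  qed
  then show ?thesis using that Cu by (metis mult_pos_pos zero_less_numeral)
qed

lemma z2_nn: "r > 0 \<Longrightarrow> z2 r \<ge> 0" unfolding z2_def using zl_ge1[of r] I_nn[of r] by simp

lemma z2_up: obtains C where "C > 0" "\<And>r. r \<ge> R + 1 \<Longrightarrow> z2 r \<le> C * (r powr (-1/2) * exp (- sqrt 2 * r))"
proof -
  obtain C where C: "C > 0" "\<And>r. r \<ge> R \<Longrightarrow> zl r \<le> C * (r powr (-1/2) * exp (sqrt 2 * r))" by (rule zl_up) blast
  obtain ci where ci: "ci > 0" "\<And>r. r \<ge> R + 1 \<Longrightarrow> I r \<le> exp (- (2 * sqrt 2) * r) / ci" by (rule I_up) blast
  have "z2 r \<le> (C / ci) * (r powr (-1/2) * exp (- sqrt 2 * r))" if r: "r \<ge> R + 1" for r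
  proof -
    have rp: "r > 0" using r R_ge by auto
    have "z2 r \<le> (C * (r powr (-1/2) * exp (sqrt 2 * r))) * (exp (- (2 * sqrt 2) * r) / ci)"
      unfolding z2_def using C(2)[of r] ci(2)[OF r] r zl_ge1[of r] I_nn[OF rp] rp
      by (intro mult_mono) auto
    also have "\<dots> = (C / ci) * (r powr (-1/2) * (exp (sqrt 2 * r) * exp (- (2 * sqrt 2) * r)))" by simp
    also have "exp (sqrt 2 * r) * exp (- (2 * sqrt 2) * r) = exp (- sqrt 2 * r)"
      by (simp add: exp_add[symmetric] algebra_simps)
    finally show ?thesis .
  qed
  then show ?thesis using that C ci by (metis divide_pos_pos)
qed

lemma z2_near0: obtains K where "K > 0" "\<And>r. 0 < r \<Longrightarrow> r \<le> d1 \<Longrightarrow> z2 r \<le> K * (1 / r^2)"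
proof -
  define K where "K = E 1 * (1/(2*a0^2) + I d1)"
  have K: "K > 0" unfolding K_def using I_nn[OF d1(1)] a0pos E_ge1[of 1] by (intro mult_pos_pos add_pos_nonneg) auto
  have "z2 r \<le> K * (1 / r^2)" if r: "0 < r" "r \<le> d1" for r
  proof -
    have "zl r \<le> E 1" using zl_le[of r] E_mono[of r 1] r d1 by auto
    then have "z2 r \<le> E 1 * ((1/(2*a0^2) + I d1) / r^2)" unfolding z2_def
      using I_near0[OF r] I_nn[of r] r E_ge1[of 1] by (intro mult_mono) auto
    then show ?thesis unfolding K_def by simp
  qed
  then show ?thesis using that K by blast
qed


lemma indep: "lin_indep_pos zl z2"
  unfolding lin_indep_pos_def
proof (intro allI impI conjI)
  fix a b assume H: "\<forall>r>0. a * zl r + b * z2 r = 0"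
  obtain C where C: "C > 0" "\<And>r. r \<ge> R + 1 \<Longrightarrow> z2 r \<le> C * (r powr (-1/2) * exp (- sqrt 2 * r))"
    by (rule z2_up) blast
  have a0: "a = 0"
  proof (rule ccontr)
    assume a: "a \<noteq> 0"
    define X where "X = \<bar>b\<bar> * C / \<bar>a\<bar>"
    have X: "X \<ge> 0" unfolding X_def using C by simp
    define r where "r = max (R + 1) (ln (X + 1) / sqrt 2)"
    have r: "r \<ge> R + 1" "r \<ge> 1" "r > 0" unfolding r_def using R_ge by auto
    have "sqrt 2 * r \<ge> ln (X + 1)" unfolding r_def
      by (metis max.cobounded2 mult.commute pos_divide_le_eq real_sqrt_gt_0_iff zero_less_numeral)
    then have ek: "exp (sqrt 2 * r) \<ge> X + 1" using X by (metis exp_le_cancel_iff exp_ln add_nonneg_pos zero_less_one)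
    have p: "r powr (-1/2) \<le> 1" using r by (simp add: powr_minus_divide powr_half_sqrt)
    have "\<bar>a\<bar> \<le> \<bar>a\<bar> * zl r" using zl_ge1[of r] r by (simp add: mult_le_cancel_left1)
    also have "\<bar>a\<bar> * zl r = \<bar>b\<bar> * z2 r"
    proof -
      have "a * zl r = - (b * z2 r)" using H r by (simp add: eq_neg_iff_add_eq_0)
      then have "\<bar>a * zl r\<bar> = \<bar>b * z2 r\<bar>" by simp
      then show ?thesis using zl_ge1[of r] z2_nn[of r] r by (simp add: abs_mult)
    qed
    also have "\<bar>b\<bar> * z2 r \<le> \<bar>b\<bar> * (C * (r powr (-1/2) * exp (- sqrt 2 * r)))"
      using C(2)[OF r(1)] by (intro mult_left_mono) auto
    also have "\<dots> \<le> \<bar>b\<bar> * (C * (1 * exp (- sqrt 2 * r)))"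
      using p C by (intro mult_left_mono mult_right_mono) auto
    also have "\<dots> = \<bar>b\<bar> * C / exp (sqrt 2 * r)" by (simp add: exp_minus divide_inverse)
    also have "\<dots> \<le> \<bar>b\<bar> * C / (X + 1)" using ek X C by (intro divide_left_mono) auto
    also have "\<dots> < \<bar>a\<bar>"
    proof -
      have "\<bar>a\<bar> * X = \<bar>b\<bar> * C" unfolding X_def using a by simp
      then have "\<bar>a\<bar> * (X + 1) = \<bar>b\<bar> * C + \<bar>a\<bar>" by (simp add: algebra_simps)
      then have "\<bar>b\<bar> * C < \<bar>a\<bar> * (X + 1)" using a by simp
      then show ?thesis using X by (simp add: divide_less_eq)
    qed
    finally show False by simp
  qed
  show "a = 0" by (rule a0)
  have "b * z2 1 = 0" using H a0 by auto
  moreover have "z2 1 > 0" unfolding z2_def using zl_ge1[of 1] I_pos by simp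
  ultimately show "b = 0" by simp
qed

lemma L1: "zl \<in> O[at_right 0](\<lambda>_. 1)"
proof (rule landau_o.bigI)
  show "E 1 > 0" using E_ge1[of 1] by simp
  show "\<forall>\<^sub>F x in at_right 0. norm (zl x) \<le> E 1 * norm (1::real)"
  proof (rule eventually_at_rightI[where a=0 and b=1])
    fix x :: real assume x: "x \<in> {0<..<1}"
    then show "norm (zl x) \<le> E 1 * norm (1::real)"
      using zl_le[of x] zl_ge1[of x] E_mono[of x 1] by auto
  qed simp
qed

lemma L2: "zl \<in> O[at_top](\<lambda>r. r powr (-1/2) * exp (sqrt 2 * r))"
proof -
  obtain C1 where C1: "C1 > 0" "\<And>r. r \<ge> R \<Longrightarrow> zl r \<le> C1 * (r powr (-1/2) * exp (sqrt 2 * r))"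
    by (rule zl_up) blast
  show ?thesis
  proof (rule landau_o.bigI[OF C1(1)])
    show "\<forall>\<^sub>F x in at_top. norm (zl x) \<le> C1 * norm (x powr (-1/2) * exp (sqrt 2 * x))"
      unfolding eventually_at_top_linorder
    proof (intro exI allI impI)
      fix x assume x: "x \<ge> R"
      then have "zl x \<ge> 0" using zl_ge1[of x] R_ge by auto
      then show "norm (zl x) \<le> C1 * norm (x powr (-1/2) * exp (sqrt 2 * x))"
        using C1(2)[OF x] by (simp add: abs_mult)
    qed
  qed
qed

lemma L3: "z2 \<in> O[at_right 0](\<lambda>r. 1 / r\<^sup>2)"
proof -
  obtain K where K: "K > 0" "\<And>r. 0 < r \<Longrightarrow> r \<le> d1 \<Longrightarrow> z2 r \<le> K * (1 / r^2)"
    by (rule z2_near0) blast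
  show ?thesis
  proof (rule landau_o.bigI[OF K(1)])
    show "\<forall>\<^sub>F x in at_right 0. norm (z2 x) \<le> K * norm (1 / x\<^sup>2)"
    proof (rule eventually_at_rightI[where a=0 and b=d1])
      fix x :: real assume x: "x \<in> {0<..<d1}"
      then show "norm (z2 x) \<le> K * norm (1 / x\<^sup>2)"
        using K(2)[of x] z2_nn[of x] by auto
    qed (rule d1(1))
  qed
qed

lemma L4: "z2 \<in> O[at_top](\<lambda>r. r powr (-1/2) * exp (- sqrt 2 * r))"
proof -
  obtain C2 where C2: "C2 > 0" "\<And>r. r \<ge> R + 1 \<Longrightarrow> z2 r \<le> C2 * (r powr (-1/2) * exp (- sqrt 2 * r))"
    by (rule z2_up) blast
  show ?thesis
  proof (rule landau_o.bigI[OF C2(1)])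
    show "\<forall>\<^sub>F x in at_top. norm (z2 x) \<le> C2 * norm (x powr (-1/2) * exp (- sqrt 2 * x))"
      unfolding eventually_at_top_linorder
    proof (intro exI allI impI)
      fix x assume x: "x \<ge> R + 1"
      then have "z2 x \<ge> 0" using z2_nn[of x] R_ge by auto
      then show "norm (z2 x) \<le> C2 * norm (x powr (-1/2) * exp (- sqrt 2 * x))"
        using C2(2)[OF x] by (simp add: abs_mult)
    qed
  qed
qed

lemma final:
  "\<exists>y1 y1' y1'' y2 y2' y2''.
           is_lin_sol w w' y1 y1' y1'' \<and> is_lin_sol w w' y2 y2' y2'' \<and>
           lin_indep_pos y1 y2 \<and>
           y1 \<in> O[at_right 0](\<lambda>_. 1) \<and>
           y1 \<in> O[at_top](\<lambda>r. r powr (-1/2) * exp (sqrt 2 * r)) \<and>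
           y2 \<in> O[at_right 0](\<lambda>r. 1 / r\<^sup>2) \<and>
           y2 \<in> O[at_top](\<lambda>r. r powr (-1/2) * exp (- sqrt 2 * r))"
  using zl_sol z2_sol indep L1 L2 L3 L4 by blast

end


theorem lemma2p2:
  fixes w w' w'' :: "real \<Rightarrow> real"
  assumes prof: "is_profile w w' w''"
    and w_bounds: "\<forall>r>0. 0 < w r \<and> w r < 1 \<and> w' r > 0"
    and w_zero: "\<exists>\<alpha>>0. (\<lambda>r. w r - \<alpha> * r) \<in> O[at_right 0](\<lambda>r. r ^ 3)"
    and w_inf: "(\<lambda>r. w r - (1 - 1 / (2 * r\<^sup>2))) \<in> O[at_top](\<lambda>r. 1 / r ^ 4)"
    and w'_inf: "(\<lambda>r. w' r - 1 / r ^ 3) \<in> O[at_top](\<lambda>r. 1 / r ^ 5)"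
  shows "\<exists>z1 z1' z1'' z2 z2' z2''.
           is_lin_sol w w' z1 z1' z1'' \<and> is_lin_sol w w' z2 z2' z2'' \<and>
           lin_indep_pos z1 z2 \<and>
           z1 \<in> O[at_right 0](\<lambda>_. 1) \<and>
           z1 \<in> O[at_top](\<lambda>r. r powr (-1/2) * exp (sqrt 2 * r)) \<and>
           z2 \<in> O[at_right 0](\<lambda>r. 1 / r\<^sup>2) \<and>
           z2 \<in> O[at_top](\<lambda>r. r powr (-1/2) * exp (- sqrt 2 * r))"
proof -
  have d: "\<And>r. r > 0 \<Longrightarrow> (w has_real_derivative w' r) (at r) \<and> (w' has_real_derivative w'' r) (at r) \<and>
        w'' r + w' r / r - w r / r\<^sup>2 + (1 - (w r)\<^sup>2) * w r = 0" and w0: "w 0 = 0"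
    using prof unfolding is_profile_def by auto
  obtain c where c: "c > 0" "eventually (\<lambda>r. norm (w r - (1 - 1 / (2 * r\<^sup>2))) \<le> c * norm (1 / r ^ 4)) at_top"
    using w_inf by (elim landau_o.bigE) blast
  then obtain N where N: "\<And>r. r \<ge> N \<Longrightarrow> norm (w r - (1 - 1 / (2 * r\<^sup>2))) \<le> c * norm (1 / r ^ 4)"
    unfolding eventually_at_top_linorder by blast
  define R0 where "R0 = max N 1"
  have winf: "\<bar>w r - (1 - 1 / (2 * r\<^sup>2))\<bar> \<le> c / r^4" if r: "r \<ge> R0" for r
    using N[of r] r unfolding R0_def by auto
  obtain \<alpha> where \<alpha>: "\<alpha> > 0" "(\<lambda>r. w r - \<alpha> * r) \<in> O[at_right 0](\<lambda>r. r ^ 3)" using w_zero by blast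
  obtain c' where c': "c' > 0" "eventually (\<lambda>r. norm (w r - \<alpha> * r) \<le> c' * norm (r ^ 3)) (at_right 0)"
    using \<alpha>(2) by (elim landau_o.bigE) blast
  then obtain b where b: "b > 0" "\<And>y. y > 0 \<Longrightarrow> y < b \<Longrightarrow> norm (w y - \<alpha> * y) \<le> c' * norm (y ^ 3)"
    unfolding eventually_at_right_field by auto
  define \<delta> where "\<delta> = min b (sqrt (\<alpha> / (2 * c')))"
  have \<delta>: "\<delta> > 0" unfolding \<delta>_def using b \<alpha> c' by simp
  have wzero: "\<alpha>/2 * r \<le> w r" if r: "0 < r" "r < \<delta>" for r
  proof -
    have "r < sqrt (\<alpha> / (2 * c'))" using r unfolding \<delta>_def by simp
    then have "r^2 < (sqrt (\<alpha> / (2 * c')))^2" using r by (intro power_strict_mono) auto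
    then have r2: "r^2 < \<alpha> / (2 * c')" using \<alpha> c' by simp
    then have "c' * r^2 \<le> \<alpha> / 2" using c' by (simp add: field_simps)
    then have "c' * r^2 * r \<le> \<alpha> / 2 * r" using r by (intro mult_right_mono) auto
    moreover have "\<bar>w r - \<alpha> * r\<bar> \<le> c' * r^3" using b(2)[of r] r unfolding \<delta>_def by simp
    moreover have "r^3 = r^2 * r" by (simp add: power3_eq_cube power2_eq_square)
    ultimately show ?thesis by (simp add: abs_le_iff algebra_simps)
  qed
  interpret Q w w' w'' R0 c "\<alpha>/2" \<delta>
  proof
    show "\<And>r. 0 < r \<Longrightarrow> (w has_real_derivative w' r) (at r)" using d by blast
    show "\<And>r. 0 < r \<Longrightarrow> 0 < w r" "\<And>r. 0 < r \<Longrightarrow> w r < 1" "\<And>r. 0 < r \<Longrightarrow> 0 < w' r"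
      using w_bounds by auto
    show "w 0 = 0" by (rule w0)
    show "\<And>r. 0 < r \<Longrightarrow> (w' has_real_derivative w'' r) (at r)" using d by blast
    show "\<And>r. 0 < r \<Longrightarrow> w'' r + w' r / r - w r / r\<^sup>2 + (1 - (w r)\<^sup>2) * w r = 0" using d by blast
    show "\<And>r. R0 \<le> r \<Longrightarrow> \<bar>w r - (1 - 1 / (2 * r\<^sup>2))\<bar> \<le> c / r ^ 4" by (rule winf)
    show "0 < R0" "0 \<le> c" using c unfolding R0_def by auto
    show "\<And>r. 0 < r \<Longrightarrow> r < \<delta> \<Longrightarrow> \<alpha> / 2 * r \<le> w r" by (rule wzero)
    show "0 < \<alpha> / 2" "0 < \<delta>" using \<alpha> \<delta> by auto
  qed
  show ?thesis by (rule final)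
qed

end
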